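(* Let $E$ be a complex vector space of dimension $2$, let $f,g$ be linear endomorphisms of $E$, and let $\mathcal{U}=\{u\in\mathbb{C}\setminus\{0\} : e^u=1+u\}$. Then the following are equivalent: (i) $f\circ g\neq g\circ f$ and for every $t\in\mathbb{C}$, $\exp(tf+g)=\exp(tf)\circ\exp(g)$; (ii) there exist $\sigma,\tau\in\mathbb{C}$ such that $\tilde f=f-\sigma\,\mathrm{id}$ and $\tilde g=g-\tau\,\mathrm{id}$ satisfy $\tilde f\neq 0$, $\tilde f^2=0$, $\tilde f\circ\tilde g=0$ and $\mathrm{tr}(\tilde g)\in\mathcal{U}$.
   Context: $\mathrm{id}$ is the identity of $E$, $\mathrm{tr}$ the trace, and $\exp(u)=\sum_{k\ge0}u^k/k!$ for a linear endomorphism $u$. *)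

theory Defs
  imports "HOL-Analysis.Analysis"
begin

text \<open>Endomorphisms of the 2-dimensional complex space E = complex^2 are represented
  by their matrices in complex^2^2; composition is the matrix product (**).\<close>

primrec mpow :: "complex^'n^'n \<Rightarrow> nat \<Rightarrow> complex^'n^'n" where
  "mpow A 0 = mat 1"
| "mpow A (Suc k) = A ** mpow A k"

definition cscale :: "complex \<Rightarrow> complex^'n^'n \<Rightarrow> complex^'n^'n" where
  "cscale c A = (\<chi> i j. c * A $ i $ j)"

definition mexp :: "complex^'n^'n \<Rightarrow> complex^'n^'n" where
  "mexp A = (\<Sum>k. (1 / fact k) *\<^sub>R mpow A k)"

definition U_set :: "complex set" where
  "U_set = {u. u \<noteq> 0 \<and> exp u = 1 + u}"

end

theory Submission
  imports Defs
begin


definition M2 :: "complex \<Rightarrow> complex \<Rightarrow> complex \<Rightarrow> complex \<Rightarrow> complex^2^2" where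
  "M2 a b c d = (\<chi> i j. if i = 1 then (if j = 1 then a else b) else (if j = 1 then c else d))"

lemma two_ne: "(2::2) \<noteq> 1" "(1::2) \<noteq> 2" by simp_all

lemma M2_nth [simp]: "M2 a b c d $ 1 $ 1 = a" "M2 a b c d $ 1 $ 2 = b"
  "M2 a b c d $ 2 $ 1 = c" "M2 a b c d $ 2 $ 2 = d"
  by (simp_all add: M2_def)

lemma M2_eta: "X = M2 (X$1$1) (X$1$2) (X$2$1) (X$2$2)"
  by (simp add: vec_eq_iff forall_2)

lemma M2_eq_iff [simp]: "M2 a b c d = M2 a' b' c' d' \<longleftrightarrow> a = a' \<and> b = b' \<and> c = c' \<and> d = d'"
  by (simp add: vec_eq_iff forall_2)

lemma M2_mult [simp]: "M2 a b c d ** M2 a' b' c' d' = M2 (a*a'+b*c') (a*b'+b*d') (c*a'+d*c') (c*b'+d*d')"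
  by (simp add: vec_eq_iff forall_2 matrix_matrix_mult_def sum_2)

lemma M2_mat: "mat k = M2 k 0 0 k"
  by (simp add: vec_eq_iff forall_2 mat_def)

lemma M2_zero: "(0::complex^2^2) = M2 0 0 0 0"
  by (simp add: vec_eq_iff forall_2)

lemma M2_add [simp]: "M2 a b c d + M2 a' b' c' d' = M2 (a+a') (b+b') (c+c') (d+d')"
  by (simp add: vec_eq_iff forall_2)

lemma M2_diff [simp]: "M2 a b c d - M2 a' b' c' d' = M2 (a-a') (b-b') (c-c') (d-d')"
  by (simp add: vec_eq_iff forall_2)

lemma M2_cscale [simp]: "cscale k (M2 a b c d) = M2 (k*a) (k*b) (k*c) (k*d)"
  by (simp add: vec_eq_iff forall_2 cscale_def)

lemma M2_trace [simp]: "trace (M2 a b c d) = a + d"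
  by (simp add: trace_def sum_2)

lemma M2_det [simp]: "det (M2 a b c d) = a * d - b * c"
  by (simp add: det_2)

definition Qf :: "complex \<Rightarrow> complex \<Rightarrow> complex" where
  "Qf l m = (if l = m then exp l else (exp l - exp m) / (l - m))"

fun qs :: "complex \<Rightarrow> complex \<Rightarrow> nat \<Rightarrow> complex" where
  "qs l m 0 = 0" | "qs l m (Suc k) = l^k + m * qs l m k"

lemma qs_diff: "(l - m) * qs l m k = l^k - m^k"
proof (induction k)
  case (Suc k)
  have "(l - m) * qs l m (Suc k) = (l - m) * l^k + m * ((l - m) * qs l m k)"
    by (simp add: algebra_simps)
  also have "\<dots> = l^Suc k - m^Suc k" unfolding Suc by (simp add: algebra_simps)
  finally show ?case .
qed simp

lemma qs_eq: "qs l l k = of_nat k * l^(k - 1)"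
proof (induction k)
  case (Suc k) then show ?case by (cases k) (auto simp: algebra_simps)
qed simp

lemma mpow_closed:
  fixes X :: "complex^2^2"
  assumes "trace X = l + m" "det X = l * m"
  shows "mpow X k = mat (l^k - l * qs l m k) + cscale (qs l m k) X"
proof (induction k)
  case 0 then show ?case by (simp add: vec_eq_iff cscale_def mat_def)
next
  case (Suc k)
  obtain a b c d where X: "X = M2 a b c d" using M2_eta by blast
  have t: "a + d = l + m" and dt: "a * d - b * c = l * m" using assms by (simp_all add: X)
  have "mpow X (Suc k) = X ** mpow X k" by simp
  also have "\<dots> = mat (l^(Suc k) - l * qs l m (Suc k)) + cscale (qs l m (Suc k)) X"
    unfolding Suc.IH using t dt by (simp add: X M2_mat) algebra
  finally show ?case .
qed

lemma qs_sums: "(\<lambda>k. qs l m k / fact k) sums Qf l m"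
proof (cases "l = m")
  case True
  have "(\<lambda>n. l^n /\<^sub>R fact n) sums exp l" by (rule exp_converges)
  moreover have "qs l l (Suc n) / fact (Suc n) = l^n /\<^sub>R fact n" for n
  proof -
    have "(fact (Suc n) :: complex) = of_nat (Suc n) * fact n" by (simp add: fact_Suc)
    moreover have "(of_nat (Suc n) :: complex) \<noteq> 0" by (metis of_nat_eq_0_iff nat.distinct(1))
    ultimately show ?thesis by (simp add: qs_eq scaleR_conv_of_real divide_inverse mult.commute)
  qed
  ultimately have "(\<lambda>n. qs l l (Suc n) / fact (Suc n)) sums exp l" by simp
  then have "(\<lambda>n. qs l l n / fact n) sums (exp l + qs l l 0 / fact 0)"
    by (rule sums_Suc_iff[THEN iffD1])
  then show ?thesis using True by (simp add: Qf_def)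
next
  case False
  have "(\<lambda>n. (l^n /\<^sub>R fact n - m^n /\<^sub>R fact n) / (l - m)) sums ((exp l - exp m) / (l - m))"
    by (intro sums_divide sums_diff exp_converges)
  moreover have "qs l m n / fact n = (l^n /\<^sub>R fact n - m^n /\<^sub>R fact n) / (l - m)" for n
  proof -
    have "qs l m n = (l^n - m^n) / (l - m)" using qs_diff[of l m n] False
      by (simp add: field_simps)
    then show ?thesis by (simp add: scaleR_conv_of_real field_simps)
  qed
  ultimately show ?thesis using False by (simp add: Qf_def)
qed

lemma sums_mat2:
  fixes F :: "nat \<Rightarrow> complex^2^2"
  assumes "\<And>i j. (\<lambda>k. F k $ i $ j) sums (L $ i $ j)"
  shows "F sums L"
  unfolding sums_def
  apply (rule vec_tendstoI)
  apply (rule vec_tendstoI)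
  using assms unfolding sums_def by (simp add: sum_component)

lemma mexp_closed:
  fixes X :: "complex^2^2"
  assumes "trace X = l + m" "det X = l * m"
  shows "mexp X = mat (exp l - l * Qf l m) + cscale (Qf l m) X"
proof -
  have "(\<lambda>k. (1 / fact k) *\<^sub>R mpow X k) sums (mat (exp l - l * Qf l m) + cscale (Qf l m) X)"
  proof (rule sums_mat2)
    fix i j
    have e: "(\<lambda>n. l^n / fact n) sums exp l" using exp_converges[of l]
      by (simp add: scaleR_conv_of_real divide_inverse mult.commute)
    have q: "(\<lambda>k. qs l m k / fact k) sums Qf l m" by (rule qs_sums)
    have P: "(\<lambda>k. (l^k / fact k - l * (qs l m k / fact k)) * mat 1 $ i $ j + (qs l m k / fact k) * X $ i $ j)
       sums ((exp l - l * Qf l m) * mat 1 $ i $ j + Qf l m * X $ i $ j)"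
      by (intro sums_add sums_mult2 sums_diff sums_mult e q)
    then show "(\<lambda>k. ((1 / fact k) *\<^sub>R mpow X k) $ i $ j) sums (mat (exp l - l * Qf l m) + cscale (Qf l m) X) $ i $ j"
    proof -
      have comp: "((1 / fact k) *\<^sub>R (M::complex^2^2)) $ i $ j = (M $ i $ j) / fact k" for k M
        by (simp only: vector_scaleR_component) (simp add: scaleR_conv_of_real field_simps)
      have "(\<lambda>k. ((1 / fact k) *\<^sub>R mpow X k) $ i $ j) = (\<lambda>k. (l^k / fact k - l * (qs l m k / fact k)) * mat 1 $ i $ j + qs l m k / fact k * X $ i $ j)"
        unfolding comp mpow_closed[OF assms]
        by (rule ext, cases "i = j") (simp_all add: cscale_def mat_def field_simps)
      moreover have "(mat (exp l - l * Qf l m) + cscale (Qf l m) X) $ i $ j = (exp l - l * Qf l m) * mat 1 $ i $ j + Qf l m * X $ i $ j"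
        by (cases "i = j") (simp_all add: cscale_def mat_def)
      ultimately show ?thesis using P by simp

    qed
  qed
  then show ?thesis unfolding mexp_def by (rule sums_unique[symmetric])
qed

definition Phi :: "complex \<Rightarrow> complex" where
  "Phi z = (if z = 0 then 1 else (exp z - 1) / z)"

lemma Phi_mult: "z * Phi z = exp z - 1"
  by (simp add: Phi_def)

lemma Qf_Phi: "Qf l m = exp m * Phi (l - m)"
proof (cases "l = m")
  case False
  have "exp l = exp m * exp (l - m)" by (simp add: exp_add[symmetric])
  then show ?thesis using False by (simp add: Qf_def Phi_def field_simps)
qed (simp add: Qf_def Phi_def)

lemma Qf_diff: "(l - m) * Qf l m = exp l - exp m"
  by (simp add: Qf_def)

lemma eig_exists: "\<exists>l m. trace (X::complex^2^2) = l + m \<and> det X = l * m"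
proof -
  let ?s = "csqrt (trace X ^ 2 / 4 - det X)"
  have "trace X = (trace X / 2 + ?s) + (trace X / 2 - ?s)" by simp
  moreover have "det X = (trace X / 2 + ?s) * (trace X / 2 - ?s)"
    by (simp add: algebra_simps power2_eq_square[symmetric] power_divide)
  ultimately show ?thesis by blast
qed

lemma mexp_tri: "mexp (M2 a b 0 d) = M2 (exp a) (b * Qf a d) 0 (exp d)"
proof -
  have "mexp (M2 a b 0 d) = mat (exp a - a * Qf a d) + cscale (Qf a d) (M2 a b 0 d)"
    by (rule mexp_closed) simp_all
  also have "\<dots> = M2 (exp a) (b * Qf a d) 0 (exp d)"
    using Qf_diff[of a d] by (simp add: M2_mat algebra_simps)
  finally show ?thesis .
qed



lemma cs_lemmas:
  fixes A B C :: "complex^2^2"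
  shows "mat c ** A = cscale c A" "A ** mat c = cscale c A"
   "A ** cscale c B = cscale c (A ** B)" "cscale c A ** B = cscale c (A ** B)"
   "cscale c (mat 1) = mat c" "cscale c (A + B) = cscale c A + cscale c B"
   "(A + B) ** C = A ** C + B ** C"
proof -
  show "cscale c (mat 1) = mat c" by (simp add: vec_eq_iff cscale_def mat_def)
  obtain c1 c2 c3 c4 where C: "C = M2 c1 c2 c3 c4" using M2_eta by blast
  obtain a1 a2 a3 a4 where A: "A = M2 a1 a2 a3 a4" using M2_eta by blast
  obtain b1 b2 b3 b4 where B: "B = M2 b1 b2 b3 b4" using M2_eta by blast
  show "mat c ** A = cscale c A" "A ** mat c = cscale c A"
   "A ** cscale c B = cscale c (A ** B)" "cscale c A ** B = cscale c (A ** B)"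
   "cscale c (A + B) = cscale c A + cscale c B"
   "(A + B) ** C = A ** C + B ** C"
    by (simp_all add: A B C M2_mat algebra_simps)
qed

lemma mexp_conj:
  fixes P Q X :: "complex^2^2"
  assumes "Q ** P = mat 1" "P ** Q = mat 1"
  shows "mexp (Q ** X ** P) = Q ** mexp X ** P"
proof -
  obtain l m where lm: "trace X = l + m" "det X = l * m" using eig_exists by blast
  have t: "trace (Q ** X ** P) = l + m"
    using lm assms by (metis matrix_mul_assoc matrix_mul_lid trace_mul_sym)
  have "det (Q ** X ** P) = det X * det (Q ** P)" by (simp add: det_mul)
  then have d: "det (Q ** X ** P) = l * m" using lm assms by simp
  show ?thesis unfolding mexp_closed[OF t d] mexp_closed[OF lm]
    by (simp add: matrix_add_ldistrib  cs_lemmas matrix_mul_assoc assms)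
qed

lemma nilp_conj:
  fixes D :: "complex^2^2"
  assumes "D \<noteq> 0" "D ** D = 0"
  shows "\<exists>P Q. Q ** P = mat 1 \<and> P ** Q = mat 1 \<and> Q ** D ** P = M2 0 1 0 0"
proof -
  obtain a b c d where D: "D = M2 a b c d" using M2_eta by blast
  have e: "a*a + b*c = 0" "a*b + b*d = 0" "c*a + d*c = 0" "c*b+d*d = 0"
    using assms(2) by (simp_all add: D M2_zero)
  show ?thesis
  proof (cases "c = 0")
    case False
    have "c * (a + d) = 0" using e(3) by (simp add: algebra_simps)
    then have dd: "d = -a" using False by (simp add: add_eq_0_iff)
    have bb: "b = - a * a / c" using e(1) False by (simp add: field_simps add_eq_0_iff)
    have "M2 0 (1/c) 1 (-a/c) ** M2 a b c d ** M2 a 1 c 0 = M2 0 1 0 0"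
      using False by (simp add: dd bb field_simps)
    moreover have "M2 0 (1/c) 1 (-a/c) ** M2 a 1 c 0 = mat 1" "M2 a 1 c 0 ** M2 0 (1/c) 1 (-a/c) = mat 1"
      using False by (simp_all add: M2_mat field_simps)
    ultimately show ?thesis unfolding D by blast
  next
    case True
    then have "a = 0" "d = 0" using e by simp_all
    then have "b \<noteq> 0" using assms(1) True by (simp add: D M2_zero)
    then show ?thesis using True \<open>a = 0\<close> \<open>d = 0\<close>
      by (intro exI[of _ "M2 b 0 0 1"] exI[of _ "M2 (1/b) 0 0 1"]) (simp add: D M2_mat)
  qed
qed



lemma key_scalar:
  assumes c: "x * b2 - u * b1 = 1"
    and E: "\<And>t. (t * b1 + b2) * Phi (t * x + u) = exp (t * x) * b2 * Phi u + t * b1 * Phi (t * x)"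
  shows "x = 0 \<and> u \<noteq> 0 \<and> exp u = 1 + u \<and> b1 \<noteq> 0"
proof -
  have x0: "x = 0"
  proof (rule ccontr)
    assume nx: "x \<noteq> 0"
    have gen: "Phi (s + u) = exp s * Phi u" for s
    proof -
      let ?t = "s / x"
      have tx: "?t * x = s" using nx by simp
      have E1: "(?t * b1 + b2) * Phi (s + u) = exp s * b2 * Phi u + ?t * b1 * Phi s"
        using E[of ?t] tx by simp
      have h1: "(s + u) * Phi (s + u) = exp s * exp u - 1" using Phi_mult[of "s+u"] by (simp add: exp_add)
      have h2: "s * Phi s = exp s - 1" by (rule Phi_mult)
      have h3: "u * Phi u = exp u - 1" by (rule Phi_mult)
      from E1 tx c h1 h2 h3 show ?thesis by algebra
    qed
    have "Phi 0 = exp (-u) * Phi u" using gen[of "-u"] by simp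
    moreover have "Phi (2 * of_real pi * \<i>) = exp (2 * of_real pi * \<i> - u) * Phi u"
      using gen[of "2 * of_real pi * \<i> - u"] by simp
    moreover have "exp (2 * of_real pi * \<i> - u) = exp (-u)"
      by (simp add: exp_diff exp_minus divide_inverse)
    moreover have "Phi (2 * of_real pi * \<i>) = 0" by (simp add: Phi_def)
    moreover have "Phi 0 = 1" by (simp add: Phi_def)
    ultimately show False by simp
  qed
  then have ub: "- u * b1 = 1" using c by simp
  then have u0: "u \<noteq> 0" and b0: "b1 \<noteq> 0" by auto
  have "(b1 + b2) * Phi u = b2 * Phi u + b1 * Phi 0" using E[of 1] x0 by simp
  then have "b1 * Phi u = b1" by (simp add: Phi_def algebra_simps)
  then have "Phi u = 1" using b0 by simp
  then have "exp u = 1 + u" using u0 by (simp add: Phi_def field_simps)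
  then show ?thesis using x0 u0 b0 by simp
qed

lemma conj_lemmas:
  fixes P Q A B :: "complex^2^2"
  assumes "Q ** P = mat 1" "P ** Q = mat 1"
  shows "(Q ** A ** P) ** (Q ** B ** P) = Q ** (A ** B) ** P"
    "Q ** (A + B) ** P = Q ** A ** P + Q ** B ** P"
    "Q ** (A - B) ** P = Q ** A ** P - Q ** B ** P"
    "Q ** cscale c A ** P = cscale c (Q ** A ** P)"
    "Q ** mat c ** P = mat c"
    "trace (Q ** A ** P) = trace A"
proof -
  show "(Q ** A ** P) ** (Q ** B ** P) = Q ** (A ** B) ** P"
  proof -
    have "X ** P ** Q = X" for X :: "complex^2^2"
      using assms(2) by (metis matrix_mul_assoc matrix_mul_rid)
    then show ?thesis by (simp add: matrix_mul_assoc)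
  qed
  show "Q ** (A + B) ** P = Q ** A ** P + Q ** B ** P"
    by (simp add: matrix_add_ldistrib cs_lemmas)
  show "Q ** (A - B) ** P = Q ** A ** P - Q ** B ** P"
  proof -
    have "Q ** (A - B) ** P + Q ** B ** P = Q ** A ** P"
      by (metis diff_add_cancel matrix_add_ldistrib cs_lemmas(7))
    then show ?thesis by (metis add_diff_cancel)
  qed
  show "Q ** cscale c A ** P = cscale c (Q ** A ** P)" by (simp add: cs_lemmas)
  show "Q ** mat c ** P = mat c" by (simp add: cs_lemmas matrix_mul_assoc assms)
  show "trace (Q ** A ** P) = trace A"
    by (metis trace_mul_sym matrix_mul_assoc assms(2) matrix_mul_rid)
qed

lemma Phi0: "Phi 0 = 1" by (simp add: Phi_def)

lemma dir2:
  fixes f g :: "complex^2^2"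
  assumes ft: "f - cscale \<sigma> (mat 1) \<noteq> 0" "(f - cscale \<sigma> (mat 1)) ** (f - cscale \<sigma> (mat 1)) = 0"
    and fg: "(f - cscale \<sigma> (mat 1)) ** (g - cscale \<tau> (mat 1)) = 0"
    and U: "trace (g - cscale \<tau> (mat 1)) \<in> U_set"
  shows "f ** g \<noteq> g ** f \<and> (\<forall>t. mexp (cscale t f + g) = mexp (cscale t f) ** mexp g)"
proof -
  let ?ft = "f - cscale \<sigma> (mat 1)" and ?gt = "g - cscale \<tau> (mat 1)"
  obtain P Q where PQ: "Q ** P = mat 1" "P ** Q = mat 1" and N: "Q ** ?ft ** P = M2 0 1 0 0"
    using nilp_conj[OF ft] by blast
  define u where "u = trace ?gt"
  have uU: "u \<noteq> 0" "exp u = 1 + u" using U by (simp_all add: u_def U_set_def)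
  have Phiu: "Phi u = 1" using uU by (simp add: Phi_def)
  have "M2 0 1 0 0 ** (Q ** ?gt ** P) = Q ** (?ft ** ?gt) ** P"
    unfolding N[symmetric] by (rule conj_lemmas(1)[OF PQ])
  also have "\<dots> = 0" using fg by simp
  finally have z: "M2 0 1 0 0 ** (Q ** ?gt ** P) = 0" .
  obtain w1 w2 w3 w4 where W: "Q ** ?gt ** P = M2 w1 w2 w3 w4" using M2_eta by blast
  have w: "w3 = 0" "w4 = 0" using z by (simp_all add: W M2_zero)
  have "trace (Q ** ?gt ** P) = u" unfolding u_def by (rule conj_lemmas(6)[OF PQ])
  then have w1: "w1 = u" using W w by simp
  have f': "Q ** f ** P = M2 \<sigma> 1 0 \<sigma>"
  proof -
    have "Q ** f ** P = Q ** (?ft + cscale \<sigma> (mat 1)) ** P" by simp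
    also have "\<dots> = Q ** ?ft ** P + Q ** cscale \<sigma> (mat 1) ** P" by (rule conj_lemmas(2)[OF PQ])
    also have "\<dots> = Q ** ?ft ** P + cscale \<sigma> (Q ** mat 1 ** P)" by (simp only: conj_lemmas(4)[OF PQ])
    also have "\<dots> = M2 \<sigma> 1 0 \<sigma>" unfolding N conj_lemmas(5)[OF PQ] by (simp add: M2_mat)
    finally show ?thesis .
  qed
  have g': "Q ** g ** P = M2 (\<tau> + u) w2 0 \<tau>"
  proof -
    have "Q ** g ** P = Q ** (?gt + cscale \<tau> (mat 1)) ** P" by simp
    also have "\<dots> = Q ** ?gt ** P + Q ** cscale \<tau> (mat 1) ** P" by (rule conj_lemmas(2)[OF PQ])
    also have "\<dots> = Q ** ?gt ** P + cscale \<tau> (Q ** mat 1 ** P)" by (simp only: conj_lemmas(4)[OF PQ])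
    also have "\<dots> = M2 (\<tau> + u) w2 0 \<tau>" unfolding W w w1 conj_lemmas(5)[OF PQ]
      by (simp add: M2_mat)
    finally show ?thesis .
  qed
  have bk: "X = P ** (Q ** X ** P) ** Q" for X :: "complex^2^2"
    by (metis matrix_mul_assoc matrix_mul_lid matrix_mul_rid PQ(2))
  have nc: "f ** g \<noteq> g ** f"
  proof
    assume "f ** g = g ** f"
    then have "(Q ** f ** P) ** (Q ** g ** P) = (Q ** g ** P) ** (Q ** f ** P)"
      by (simp only: conj_lemmas(1)[OF PQ])
    then show False unfolding f' g' using uU by simp
  qed
  have ex: "mexp (cscale t f + g) = mexp (cscale t f) ** mexp g" for t
  proof -
    have A: "Q ** (cscale t f + g) ** P = M2 (t * \<sigma> + (\<tau> + u)) (t + w2) 0 (t * \<sigma> + \<tau>)"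
      by (simp add: conj_lemmas[OF PQ] f' g' algebra_simps)
    have B: "Q ** cscale t f ** P = M2 (t * \<sigma>) t 0 (t * \<sigma>)"
      by (simp add: conj_lemmas[OF PQ] f')
    have "mexp (Q ** (cscale t f + g) ** P) = mexp (Q ** cscale t f ** P) ** mexp (Q ** g ** P)"
      unfolding A B g' mexp_tri Qf_Phi using Phiu
      by (simp add: exp_add algebra_simps Phi0)
    then have "Q ** mexp (cscale t f + g) ** P = (Q ** mexp (cscale t f) ** P) ** (Q ** mexp g ** P)"
      by (simp add: mexp_conj PQ)
    then have "Q ** mexp (cscale t f + g) ** P = Q ** (mexp (cscale t f) ** mexp g) ** P"
      by (simp only: conj_lemmas(1)[OF PQ])
    then show ?thesis by (metis bk)
  qed
  show ?thesis using nc ex by blast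
qed

lemma L1:
  fixes f g :: "complex^2^2"
  shows "trace ((mat p + cscale q (cscale t f + g)) ** (f**g - g**f)) = 0"
    "trace (((mat a + cscale b (cscale t f)) ** (mat c + cscale e g)) ** (f**g - g**f)) = - b*t*e*det (f**g - g**f)"
proof -
  obtain f1 f2 f3 f4 where F: "f = M2 f1 f2 f3 f4" using M2_eta by blast
  obtain g1 g2 g3 g4 where G: "g = M2 g1 g2 g3 g4" using M2_eta by blast
  show "trace ((mat p + cscale q (cscale t f + g)) ** (f**g - g**f)) = 0"
    by (simp add: F G M2_mat) algebra
  show "trace (((mat a + cscale b (cscale t f)) ** (mat c + cscale e g)) ** (f**g - g**f)) = - b*t*e*det (f**g - g**f)"
    by (simp add: F G M2_mat) algebra
qed

lemma L2:
  fixes f g :: "complex^2^2"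
  shows "(f**g - g**f) ** (f**g - g**f) = mat (- det (f**g - g**f))"
    "f ** (f**g - g**f) + (f**g - g**f) ** f = cscale (trace f) (f**g - g**f)"
    "trace (cscale t f) = t * trace f" "det (cscale t f) = t^2 * det f"
    "16 * det (f**g - g**f) = 4 * ((trace f)^2 - 4 * det f) * ((trace g)^2 - 4 * det g)
        - ((trace (f+g))^2 - 4 * det (f+g) - ((trace f)^2 - 4 * det f) - ((trace g)^2 - 4 * det g))^2"
    "(trace (cscale t f + g))^2 - 4 * det (cscale t f + g) = t^2 * ((trace f)^2 - 4 * det f)
        + t * ((trace (f+g))^2 - 4 * det (f+g) - ((trace f)^2 - 4 * det f) - ((trace g)^2 - 4 * det g))
        + ((trace g)^2 - 4 * det g)"
proof -
  obtain f1 f2 f3 f4 where F: "f = M2 f1 f2 f3 f4" using M2_eta by blast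
  obtain g1 g2 g3 g4 where G: "g = M2 g1 g2 g3 g4" using M2_eta by blast
  show "(f**g - g**f) ** (f**g - g**f) = mat (- det (f**g - g**f))"
    by (simp add: F G M2_mat) algebra
  show "f ** (f**g - g**f) + (f**g - g**f) ** f = cscale (trace f) (f**g - g**f)"
    by (simp add: F G) algebra
  show "trace (cscale t f) = t * trace f" "det (cscale t f) = t^2 * det f"
    by (simp_all add: F) algebra+
  show "16 * det (f**g - g**f) = 4 * ((trace f)^2 - 4 * det f) * ((trace g)^2 - 4 * det g)
        - ((trace (f+g))^2 - 4 * det (f+g) - ((trace f)^2 - 4 * det f) - ((trace g)^2 - 4 * det g))^2"
    by (simp add: F G) algebra
  show "(trace (cscale t f + g))^2 - 4 * det (cscale t f + g) = t^2 * ((trace f)^2 - 4 * det f)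
        + t * ((trace (f+g))^2 - 4 * det (f+g) - ((trace f)^2 - 4 * det f) - ((trace g)^2 - 4 * det g))
        + ((trace g)^2 - 4 * det g)"
    by (simp add: F G) algebra
qed

lemma L4:
  fixes f g :: "complex^2^2"
  assumes "q \<noteq> 0" "mat p + cscale q (cscale t f + g) = (mat a + cscale b (cscale t f)) ** mat c"
  shows "f ** g = g ** f"
proof -
  obtain f1 f2 f3 f4 where F: "f = M2 f1 f2 f3 f4" using M2_eta by blast
  obtain g1 g2 g3 g4 where G: "g = M2 g1 g2 g3 g4" using M2_eta by blast
  have e: "p + q * (t * f1 + g1) = (a + b * (t * f1)) * c" "q * (t * f2 + g2) = b * (t * f2) * c"
     "q * (t * f3 + g3) = b * (t * f3) * c" "p + q * (t * f4 + g4) = (a + b * (t * f4)) * c"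
    using assms(2) by (simp_all add: F G M2_mat algebra_simps)
  have "q * (f1 * g2 + f2 * g4 - (g1 * f2 + g2 * f4)) = 0" "q * (f3 * g1 + f4 * g3 - (g3 * f1 + g4 * f3)) = 0"
    "q * (f1 * g1 + f2 * g3 - (g1 * f1 + g2 * f3)) = 0" "q * (f3 * g2 + f4 * g4 - (g3 * f2 + g4 * f4)) = 0"
    using e by algebra+
  then show ?thesis using assms(1) by (simp add: F G)
qed


lemma mz:
  fixes A :: "complex^2^2"
  shows "0 ** A = 0" "A ** 0 = 0" "cscale 0 A = 0" "- M2 a b c d = M2 (-a) (-b) (-c) (-d)"
proof -
  obtain a1 a2 a3 a4 where A: "A = M2 a1 a2 a3 a4" using M2_eta by blast
  show "0 ** A = 0" "A ** 0 = 0" "cscale 0 A = 0" by (simp_all add: A M2_zero)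
  show "- M2 a b c d = M2 (-a) (-b) (-c) (-d)" by (simp add: vec_eq_iff forall_2)
qed

lemma conj_zero:
  fixes P Q X :: "complex^2^2"
  assumes "Q ** P = mat 1" "P ** Q = mat 1" "Q ** X ** P = 0"
  shows "X = 0"
proof -
  have "X = P ** (Q ** X ** P) ** Q"
    by (metis matrix_mul_assoc matrix_mul_lid matrix_mul_rid assms(2))
  then show ?thesis using assms(3) by (simp add: mz)
qed

lemma Phi1: "Phi 1 \<noteq> 0"
proof -
  have "exp (1::complex) = of_real (exp 1)" using exp_of_real[of 1] by simp
  moreover have "exp (1::real) \<noteq> 1" by simp
  ultimately have "exp (1::complex) \<noteq> 1" by (metis of_real_eq_1_iff)
  then show ?thesis by (simp add: Phi_def)
qed

lemma dir1_case1:
  fixes f g :: "complex^2^2"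
  assumes nc: "f ** g \<noteq> g ** f" and E: "\<And>t. mexp (cscale t f + g) = mexp (cscale t f) ** mexp g"
    and DD: "(f ** g - g ** f) ** (f ** g - g ** f) \<noteq> 0"
  shows False
proof -
  define D where "D = f ** g - g ** f"
  have dD: "det D \<noteq> 0"
  proof
    assume "det D = 0"
    then have "D ** D = 0" using L2(1)[of f g] unfolding D_def by simp
    then show False using DD unfolding D_def by simp
  qed
  obtain lf mf where lmf: "trace f = lf + mf" "det f = lf * mf" using eig_exists by blast
  obtain lg mg where lmg: "trace g = lg + mg" "det g = lg * mg" using eig_exists by blast
  have mt: "mexp (cscale t f) = mat (exp (t*lf) - (t*lf) * Qf (t*lf) (t*mf)) + cscale (Qf (t*lf) (t*mf)) (cscale t f)" for t
    by (rule mexp_closed) (simp_all add: L2 lmf algebra_simps power2_eq_square)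
  have mg: "mexp g = mat (exp lg - lg * Qf lg mg) + cscale (Qf lg mg) g" by (rule mexp_closed[OF lmg])
  define t1 where "t1 = (if lf = mf then 1 else 1 / (lf - mf))"
  have t1: "t1 \<noteq> 0" "Qf (t1*lf) (t1*mf) \<noteq> 0"
  proof -
    show "t1 \<noteq> 0" by (simp add: t1_def)
    show "Qf (t1*lf) (t1*mf) \<noteq> 0"
    proof (cases "lf = mf")
      case True then show ?thesis by (simp add: Qf_def)
    next
      case False
      have "t1*lf - t1*mf = t1 * (lf - mf)" by (simp add: algebra_simps)
      also have "\<dots> = 1" using False by (simp add: t1_def)
      finally have "t1*lf - t1*mf = 1" .
      then show ?thesis using Phi1 by (simp add: Qf_Phi)
    qed
  qed
  have Qg: "Qf lg mg = 0"
  proof -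
    obtain l m where lm: "trace (cscale t1 f + g) = l + m" "det (cscale t1 f + g) = l * m"
      using eig_exists by blast
    have "mat (exp l - l * Qf l m) + cscale (Qf l m) (cscale t1 f + g)
      = (mat (exp (t1*lf) - (t1*lf) * Qf (t1*lf) (t1*mf)) + cscale (Qf (t1*lf) (t1*mf)) (cscale t1 f))
        ** (mat (exp lg - lg * Qf lg mg) + cscale (Qf lg mg) g)"
      using E[of t1] unfolding mexp_closed[OF lm] mt mg .
    then have "trace ((mat (exp l - l * Qf l m) + cscale (Qf l m) (cscale t1 f + g)) ** D)
      = trace (((mat (exp (t1*lf) - (t1*lf) * Qf (t1*lf) (t1*mf)) + cscale (Qf (t1*lf) (t1*mf)) (cscale t1 f))
        ** (mat (exp lg - lg * Qf lg mg) + cscale (Qf lg mg) g)) ** D)" by simp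
    then have "- Qf (t1*lf) (t1*mf) * t1 * Qf lg mg * det D = 0"
      unfolding D_def L1 by simp
    then show ?thesis using t1 dD by simp
  qed
  then have mg0: "mexp g = mat (exp lg)" using mg by (simp add: mz)
  define A where "A = (trace f)^2 - 4 * det f"
  define C where "C = (trace g)^2 - 4 * det g"
  define B where "B = (trace (f+g))^2 - 4 * det (f+g) - A - C"
  have poly: "(trace (cscale t f + g))^2 - 4 * det (cscale t f + g) = t^2 * A + t * B + C" for t
    unfolding A_def B_def C_def by (rule L2(6))
  have idD: "16 * det D = 4 * A * C - B^2" unfolding A_def B_def C_def D_def by (rule L2(5))
  obtain t0 where t0: "t0^2 * A + t0 * B + C = 0"
  proof (cases "A = 0")
    case False
    define s where "s = csqrt (B^2 - 4 * A * C)"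
    have s2: "s^2 = B^2 - 4 * A * C" by (simp add: s_def)
    have "((-B + s) / (2*A))^2 * A + ((-B + s) / (2*A)) * B + C = (s^2 - B^2 + 4 * A * C) / (4 * A)"
      using False by (simp add: field_simps power2_eq_square)
    also have "\<dots> = 0" using s2 by simp
    finally show ?thesis by (rule that)
  next
    case True
    then have "B \<noteq> 0" using idD dD by auto
    then have "(-C/B)^2 * A + (-C/B) * B + C = 0" using True by simp
    then show ?thesis by (rule that)
  qed
  define X0 where "X0 = cscale t0 f + g"
  define l0 where "l0 = trace X0 / 2"
  have disc0: "(trace X0)^2 - 4 * det X0 = 0" using poly[of t0] t0 unfolding X0_def by simp
  have l0: "trace X0 = l0 + l0" "det X0 = l0 * l0"
    using disc0 by (simp_all add: l0_def field_simps power2_eq_square)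
  have "mat (exp l0 - l0 * Qf l0 l0) + cscale (Qf l0 l0) (cscale t0 f + g)
     = (mat (exp (t0*lf) - (t0*lf) * Qf (t0*lf) (t0*mf)) + cscale (Qf (t0*lf) (t0*mf)) (cscale t0 f)) ** mat (exp lg)"
    using E[of t0] unfolding X0_def[symmetric] mexp_closed[OF l0] mt mg0 unfolding X0_def .
  moreover have "Qf l0 l0 \<noteq> 0" by (simp add: Qf_def)
  ultimately have "f ** g = g ** f" by (rule L4[rotated])
  then show False using nc by simp
qed


lemma dir1_case2:
  fixes f g :: "complex^2^2"
  assumes nc: "f ** g \<noteq> g ** f" and E: "\<And>t. mexp (cscale t f + g) = mexp (cscale t f) ** mexp g"
    and DD: "(f ** g - g ** f) ** (f ** g - g ** f) = 0"
  shows "\<exists>\<sigma> \<tau>. f - cscale \<sigma> (mat 1) \<noteq> 0 \<and> (f - cscale \<sigma> (mat 1)) ** (f - cscale \<sigma> (mat 1)) = 0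
     \<and> (f - cscale \<sigma> (mat 1)) ** (g - cscale \<tau> (mat 1)) = 0 \<and> trace (g - cscale \<tau> (mat 1)) \<in> U_set"
proof -
  define D where "D = f ** g - g ** f"
  have D0: "D \<noteq> 0" using nc by (simp add: D_def)
  obtain P Q where PQ: "Q ** P = mat 1" "P ** Q = mat 1" and N: "Q ** D ** P = M2 0 1 0 0"
    using nilp_conj[OF D0 DD[folded D_def]] by blast
  define f' where "f' = Q ** f ** P"
  define g' where "g' = Q ** g ** P"
  have Nfg: "f' ** g' - g' ** f' = M2 0 1 0 0"
    unfolding f'_def g'_def conj_lemmas(1)[OF PQ] conj_lemmas(3)[OF PQ, symmetric] D_def[symmetric] N ..
  obtain a1 b1 c1 d1 where F': "f' = M2 a1 b1 c1 d1" using M2_eta by blast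
  obtain a2 b2 c2 d2 where G': "g' = M2 a2 b2 c2 d2" using M2_eta by blast
  have Ngf: "g' ** f' - f' ** g' = M2 0 (-1) 0 0"
  proof -
    have "g' ** f' - f' ** g' = - (f' ** g' - g' ** f')" by simp
    then show ?thesis unfolding Nfg by (simp add: mz)
  qed
  have "f' ** M2 0 1 0 0 + M2 0 1 0 0 ** f' = cscale (trace f') (M2 0 1 0 0)"
    using L2(2)[of f' g'] unfolding Nfg .
  then have c1: "c1 = 0" by (simp add: F')
  have "g' ** M2 0 (-1) 0 0 + M2 0 (-1) 0 0 ** g' = cscale (trace g') (M2 0 (-1) 0 0)"
    using L2(2)[of g' f'] unfolding Ngf .
  then have c2: "c2 = 0" by (simp add: G')
  have cstr: "(a1 - d1) * b2 - (a2 - d2) * b1 = 1"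
    using Nfg by (simp add: F' G' c1 c2 algebra_simps)
  have bk: "X = P ** (Q ** X ** P) ** Q" for X :: "complex^2^2"
    by (metis matrix_mul_assoc matrix_mul_lid matrix_mul_rid PQ(2))
  have E': "mexp (cscale t f' + g') = mexp (cscale t f') ** mexp g'" for t
  proof -
    have "mexp (cscale t f' + g') = Q ** mexp (cscale t f + g) ** P"
      unfolding f'_def g'_def conj_lemmas(4)[OF PQ, symmetric] conj_lemmas(2)[OF PQ, symmetric]
      by (rule mexp_conj[OF PQ])
    also have "\<dots> = Q ** (mexp (cscale t f) ** mexp g) ** P" using E by simp
    also have "\<dots> = (Q ** mexp (cscale t f) ** P) ** (Q ** mexp g ** P)"
      by (rule conj_lemmas(1)[OF PQ, symmetric])
    also have "\<dots> = mexp (cscale t f') ** mexp g'"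
      unfolding f'_def g'_def conj_lemmas(4)[OF PQ, symmetric] mexp_conj[OF PQ] ..
    finally show ?thesis .
  qed
  define x where "x = a1 - d1"
  define u where "u = a2 - d2"
  have key: "(t * b1 + b2) * Phi (t * x + u) = exp (t * x) * b2 * Phi u + t * b1 * Phi (t * x)" for t
  proof -
    have "mexp (M2 (t*a1 + a2) (t*b1 + b2) 0 (t*d1 + d2)) = mexp (M2 (t*a1) (t*b1) 0 (t*d1)) ** mexp (M2 a2 b2 0 d2)"
      using E'[of t] by (simp add: F' G' c1 c2)
    then have "(t*b1 + b2) * Qf (t*a1 + a2) (t*d1 + d2) = exp (t*a1) * (b2 * Qf a2 d2) + t * b1 * Qf (t*a1) (t*d1) * exp d2"
      unfolding mexp_tri by simp
    moreover have "t*a1 + a2 - (t*d1 + d2) = t * x + u" "t*a1 - t*d1 = t * x" "a2 - d2 = u"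
      by (simp_all add: x_def u_def algebra_simps)
    moreover have "exp (t*a1) = exp (t * x) * exp (t * d1)"
      by (simp add: x_def exp_add[symmetric] algebra_simps)
    ultimately have "(t*b1 + b2) * (exp (t*d1 + d2) * Phi (t * x + u))
       = exp (t * x) * exp (t * d1) * (b2 * (exp d2 * Phi u)) + t * b1 * (exp (t*d1) * Phi (t * x)) * exp d2"
      unfolding Qf_Phi by simp
    then have "(exp (t*d1) * exp d2) * ((t * b1 + b2) * Phi (t * x + u))
       = (exp (t*d1) * exp d2) * (exp (t * x) * b2 * Phi u + t * b1 * Phi (t * x))"
      by (simp add: exp_add algebra_simps)
    then show ?thesis by simp
  qed
  have ks: "x = 0 \<and> u \<noteq> 0 \<and> exp u = 1 + u \<and> b1 \<noteq> 0"
    by (rule key_scalar[OF _ key]) (use cstr in \<open>simp add: x_def u_def\<close>)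
  have ad: "a1 = d1" using ks by (simp add: x_def)
  let ?ft = "f - cscale a1 (mat 1)" and ?gt = "g - cscale d2 (mat 1)"
  have fq: "Q ** ?ft ** P = M2 0 b1 0 0"
    unfolding conj_lemmas(3)[OF PQ] conj_lemmas(4)[OF PQ] conj_lemmas(5)[OF PQ] f'_def[symmetric]
    by (simp add: F' c1 ad M2_mat)
  have gq: "Q ** ?gt ** P = M2 u b2 0 0"
    unfolding conj_lemmas(3)[OF PQ] conj_lemmas(4)[OF PQ] conj_lemmas(5)[OF PQ] g'_def[symmetric]
    by (simp add: G' c2 M2_mat u_def)
  have s1: "?ft \<noteq> 0"
  proof
    assume "?ft = 0"
    then have "Q ** ?ft ** P = 0" by (simp add: mz)
    then show False using fq ks by (simp add: M2_zero)
  qed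
  have s2: "?ft ** ?ft = 0"
    by (rule conj_zero[OF PQ]) (simp add: conj_lemmas(1)[OF PQ, symmetric] fq M2_zero)
  have s3: "?ft ** ?gt = 0"
    by (rule conj_zero[OF PQ]) (simp add: conj_lemmas(1)[OF PQ, symmetric] fq gq M2_zero)
  have s4: "trace ?gt \<in> U_set"
  proof -
    have "trace ?gt = u" using conj_lemmas(6)[OF PQ, of ?gt] gq by simp
    then show ?thesis using ks by (simp add: U_set_def)
  qed
  show ?thesis using s1 s2 s3 s4 by blast
qed

theorem theorem2:
  fixes f g :: "complex^2^2"
  shows "((f ** g \<noteq> g ** f) \<and>
          (\<forall>t::complex. mexp (cscale t f + g) = mexp (cscale t f) ** mexp g))
     \<longleftrightarrow>
         (\<exists>\<sigma> \<tau> :: complex.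
            let ft = f - cscale \<sigma> (mat 1); gt = g - cscale \<tau> (mat 1) in
              ft \<noteq> 0 \<and> ft ** ft = 0 \<and> ft ** gt = 0 \<and> trace gt \<in> U_set)"
proof
  assume h: "(f ** g \<noteq> g ** f) \<and> (\<forall>t::complex. mexp (cscale t f + g) = mexp (cscale t f) ** mexp g)"
  show "\<exists>\<sigma> \<tau> :: complex.
            let ft = f - cscale \<sigma> (mat 1); gt = g - cscale \<tau> (mat 1) in
              ft \<noteq> 0 \<and> ft ** ft = 0 \<and> ft ** gt = 0 \<and> trace gt \<in> U_set"
  proof (cases "(f ** g - g ** f) ** (f ** g - g ** f) = 0")
    case True
    from dir1_case2[OF conjunct1[OF h] spec[OF conjunct2[OF h]] True] show ?thesis
      by (simp add: Let_def)
  next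
    case False
    from dir1_case1[OF conjunct1[OF h] spec[OF conjunct2[OF h]] False] show ?thesis ..
  qed
next
  assume "\<exists>\<sigma> \<tau> :: complex.
            let ft = f - cscale \<sigma> (mat 1); gt = g - cscale \<tau> (mat 1) in
              ft \<noteq> 0 \<and> ft ** ft = 0 \<and> ft ** gt = 0 \<and> trace gt \<in> U_set"
  then obtain \<sigma> \<tau> where "f - cscale \<sigma> (mat 1) \<noteq> 0" "(f - cscale \<sigma> (mat 1)) ** (f - cscale \<sigma> (mat 1)) = 0"
     "(f - cscale \<sigma> (mat 1)) ** (g - cscale \<tau> (mat 1)) = 0" "trace (g - cscale \<tau> (mat 1)) \<in> U_set"
    by (auto simp: Let_def)
  from dir2[OF this] show "(f ** g \<noteq> g ** f) \<and> (\<forall>t::complex. mexp (cscale t f + g) = mexp (cscale t f) ** mexp g)" .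
qed

end
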